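(* Let $d\ge1$, $u\in\mathbb{C}\setminus\{0\}$, let $z,x_1,\ldots,x_{d-1}\in\mathbb{C}$ be the parameters of the Markov trace $\mathrm{tr}$, and $x_0=1$. For all $0\le m\le d-1$, $$\mathrm{tr}\big(e_1^{(m)}e_2\,g_{1,2}\big)=(u+1)z^2x_m+(u+2)z\,E^{(m)}+\mathrm{tr}\big(e_1^{(m)}e_2\big).$$
   Context: The Yokonuma–Hecke algebra $\mathrm{Y}_{d,n}(u)$ is the unital associative $\mathbb{C}$-algebra with generators $g_1,\ldots,g_{n-1},t_1,\ldots,t_n$ and relations: $g_ig_j=g_jg_i$ for $|i-j|>1$; $g_{i+1}g_ig_{i+1}=g_ig_{i+1}g_i$; $t_it_j=t_jt_i$; $t_i^d=1$; $g_it_i=t_{i+1}g_i$; $g_it_{i+1}=t_ig_i$; $g_it_j=t_jg_i$ for $j\ne i,i+1$; $g_i^2=1+(u-1)e_i+(u-1)e_ig_i$, where $e_i=\frac1d\sum_{s=0}^{d-1}t_i^st_{i+1}^{d-s}$; $\mathrm{Y}_{d,n}(u)\subset\mathrm{Y}_{d,n+1}(u)$ naturally. Also $e_i^{(m)}=\frac1d\sum_{s=0}^{d-1}t_i^{m+s}t_{i+1}^{d-s}$. For $w\in S_n$ with reduced expression $s_{i_1}\cdots s_{i_k}$ put $g_w=g_{i_1}\cdots g_{i_k}$, and $g_{1,2}=\sum_{w\in S_3}g_w\in\mathrm{Y}_{d,3}(u)$. For complex $z,x_1,\ldots,x_{d-1}$, $\mathrm{tr}$ is the unique linear map on $\bigcup_n\mathrm{Y}_{d,n}(u)$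 with $\mathrm{tr}(ab)=\mathrm{tr}(ba)$, $\mathrm{tr}(1)=1$, $\mathrm{tr}(ag_n)=z\,\mathrm{tr}(a)$, $\mathrm{tr}(at_{n+1}^s)=x_s\,\mathrm{tr}(a)$ for $a,b\in\mathrm{Y}_{d,n}(u)$. Indices of $x$ are taken mod $d$ and $E^{(m)}=\frac1d\sum_{s=0}^{d-1}x_{m+s}x_{d-s}$. *)

theory Defs
  imports Main "HOL.Complex"
begin

(* The Yokonuma--Hecke tower is modelled abstractly: an arbitrary ring 'a,
   a central ring embedding emb : complex => 'a (so 'a is a C-algebra with
   scalar multiplication c . a = emb c * a), and elements g i (i >= 1),
   t i (i >= 1) satisfying the defining relations of Y_{d,n}(u) for all n. *)

definition ee :: "nat \<Rightarrow> (complex \<Rightarrow> 'a::ring_1) \<Rightarrow> (nat \<Rightarrow> 'a) \<Rightarrow> nat \<Rightarrow> nat \<Rightarrow> 'a" where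
  "ee d emb t m i = emb (1 / of_nat d) * (\<Sum>s<d. t i ^ (m + s) * t (Suc i) ^ (d - s))"

abbreviation e0 :: "nat \<Rightarrow> (complex \<Rightarrow> 'a::ring_1) \<Rightarrow> (nat \<Rightarrow> 'a) \<Rightarrow> nat \<Rightarrow> 'a" where
  "e0 d emb t i \<equiv> ee d emb t 0 i"

(* g_{1,2} = sum of g_w over w in S_3, with reduced words
   1, s1, s2, s1 s2, s2 s1, s1 s2 s1 *)
definition g12 :: "(nat \<Rightarrow> 'a::ring_1) \<Rightarrow> 'a" where
  "g12 g = 1 + g 1 + g 2 + g 1 * g 2 + g 2 * g 1 + g 1 * g 2 * g 1"

inductive_set Yalg :: "(complex \<Rightarrow> 'a::ring_1) \<Rightarrow> (nat \<Rightarrow> 'a) \<Rightarrow> (nat \<Rightarrow> 'a) \<Rightarrow> nat \<Rightarrow> 'a set"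
  for emb g t n where
  scal: "emb c \<in> Yalg emb g t n"
| gen_g: "1 \<le> i \<Longrightarrow> i < n \<Longrightarrow> g i \<in> Yalg emb g t n"
| gen_t: "1 \<le> i \<Longrightarrow> i \<le> n \<Longrightarrow> t i \<in> Yalg emb g t n"
| add: "a \<in> Yalg emb g t n \<Longrightarrow> b \<in> Yalg emb g t n \<Longrightarrow> a + b \<in> Yalg emb g t n"
| mult: "a \<in> Yalg emb g t n \<Longrightarrow> b \<in> Yalg emb g t n \<Longrightarrow> a * b \<in> Yalg emb g t n"

definition YH_rels :: "nat \<Rightarrow> complex \<Rightarrow> (complex \<Rightarrow> 'a::ring_1) \<Rightarrow> (nat \<Rightarrow> 'a) \<Rightarrow> (nat \<Rightarrow> 'a) \<Rightarrow> bool" where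
  "YH_rels d u emb g t \<longleftrightarrow>
     emb 1 = 1 \<and>
     (\<forall>a b. emb (a + b) = emb a + emb b) \<and>
     (\<forall>a b. emb (a * b) = emb a * emb b) \<and>
     (\<forall>c y. emb c * y = y * emb c) \<and>
     (\<forall>i j. 1 \<le> i \<longrightarrow> 1 \<le> j \<longrightarrow> (i + 1 < j \<or> j + 1 < i) \<longrightarrow> g i * g j = g j * g i) \<and>
     (\<forall>i. 1 \<le> i \<longrightarrow> g (i+1) * g i * g (i+1) = g i * g (i+1) * g i) \<and>
     (\<forall>i j. 1 \<le> i \<longrightarrow> 1 \<le> j \<longrightarrow> t i * t j = t j * t i) \<and>
     (\<forall>i. 1 \<le> i \<longrightarrow> t i ^ d = 1) \<and>
     (\<forall>i. 1 \<le> i \<longrightarrow> g i * t i = t (i+1) * g i) \<and>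
     (\<forall>i. 1 \<le> i \<longrightarrow> g i * t (i+1) = t i * g i) \<and>
     (\<forall>i j. 1 \<le> i \<longrightarrow> 1 \<le> j \<longrightarrow> j \<noteq> i \<longrightarrow> j \<noteq> i + 1 \<longrightarrow> g i * t j = t j * g i) \<and>
     (\<forall>i. 1 \<le> i \<longrightarrow> g i ^ 2 = 1 + emb (u - 1) * e0 d emb t i + emb (u - 1) * e0 d emb t i * g i)"

definition markov_trace :: "nat \<Rightarrow> (complex \<Rightarrow> 'a::ring_1) \<Rightarrow> (nat \<Rightarrow> 'a) \<Rightarrow> (nat \<Rightarrow> 'a)
     \<Rightarrow> complex \<Rightarrow> (nat \<Rightarrow> complex) \<Rightarrow> ('a \<Rightarrow> complex) \<Rightarrow> bool" where
  "markov_trace d emb g t z x tr \<longleftrightarrow>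
     (\<forall>n a b. a \<in> Yalg emb g t n \<longrightarrow> b \<in> Yalg emb g t n \<longrightarrow> tr (a + b) = tr a + tr b) \<and>
     (\<forall>n c a. a \<in> Yalg emb g t n \<longrightarrow> tr (emb c * a) = c * tr a) \<and>
     (\<forall>n a b. a \<in> Yalg emb g t n \<longrightarrow> b \<in> Yalg emb g t n \<longrightarrow> tr (a * b) = tr (b * a)) \<and>
     tr 1 = 1 \<and>
     (\<forall>n a. 1 \<le> n \<longrightarrow> a \<in> Yalg emb g t n \<longrightarrow> tr (a * g n) = z * tr a) \<and>
     (\<forall>n a s. 1 \<le> s \<longrightarrow> s \<le> d - 1 \<longrightarrow> a \<in> Yalg emb g t n \<longrightarrow> tr (a * t (n+1) ^ s) = x s * tr a)"

definition xm :: "nat \<Rightarrow> (nat \<Rightarrow> complex) \<Rightarrow> nat \<Rightarrow> complex" where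
  "xm d x k = x (k mod d)"

definition EE :: "nat \<Rightarrow> (nat \<Rightarrow> complex) \<Rightarrow> nat \<Rightarrow> complex" where
  "EE d x m = (1 / of_nat d) * (\<Sum>s<d. xm d x (m + s) * xm d x (d - s))"

end

theory Submission
  imports Defs
begin

locale YH =
  fixes d :: nat and u z :: complex and x :: "nat \<Rightarrow> complex"
    and emb :: "complex \<Rightarrow> 'a::ring_1" and g t :: "nat \<Rightarrow> 'a" and tr :: "'a \<Rightarrow> complex"
  assumes d1: "d \<ge> 1" and x0: "x 0 = 1" and rels: "YH_rels d u emb g t"
    and mt: "markov_trace d emb g t z x tr"
begin

abbreviation Y where "Y n \<equiv> Yalg emb g t n"

lemma emb1: "emb 1 = 1" using rels unfolding YH_rels_def by blast
lemma emb_add: "emb (a+b) = emb a + emb b" using rels unfolding YH_rels_def by blast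
lemma emb_mult: "emb (a*b) = emb a * emb b" using rels unfolding YH_rels_def by blast
lemma emb_comm: "emb c * y = y * emb c" using rels unfolding YH_rels_def by blast
lemma emb0: "emb 0 = 0" using emb_add[of 0 0] by simp
lemma g_far: "1 \<le> i \<Longrightarrow> 1 \<le> j \<Longrightarrow> (i + 1 < j \<or> j + 1 < i) \<Longrightarrow> g i * g j = g j * g i"
  using rels unfolding YH_rels_def by blast
lemma braid: "1 \<le> i \<Longrightarrow> g (i+1) * g i * g (i+1) = g i * g (i+1) * g i"
  using rels unfolding YH_rels_def by blast
lemma t_comm: "1 \<le> i \<Longrightarrow> 1 \<le> j \<Longrightarrow> t i * t j = t j * t i"
  using rels unfolding YH_rels_def by blast
lemma t_pow_d: "1 \<le> i \<Longrightarrow> t i ^ d = 1"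
  using rels unfolding YH_rels_def by blast
lemma g_t_same: "1 \<le> i \<Longrightarrow> g i * t i = t (i+1) * g i"
  using rels unfolding YH_rels_def by blast
lemma g_t_next: "1 \<le> i \<Longrightarrow> g i * t (i+1) = t i * g i"
  using rels unfolding YH_rels_def by blast
lemma g_t_far: "1 \<le> i \<Longrightarrow> 1 \<le> j \<Longrightarrow> j \<noteq> i \<Longrightarrow> j \<noteq> i + 1 \<Longrightarrow> g i * t j = t j * g i"
  using rels unfolding YH_rels_def by blast
lemma quad: "1 \<le> i \<Longrightarrow> g i ^ 2 = 1 + emb (u - 1) * e0 d emb t i + emb (u - 1) * e0 d emb t i * g i"
  using rels unfolding YH_rels_def by blast

lemma tr_add: "a \<in> Y n \<Longrightarrow> b \<in> Y n \<Longrightarrow> tr (a + b) = tr a + tr b"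
  using mt unfolding markov_trace_def by blast
lemma tr_scal: "a \<in> Y n \<Longrightarrow> tr (emb c * a) = c * tr a"
  using mt unfolding markov_trace_def by blast
lemma tr_cyc: "a \<in> Y n \<Longrightarrow> b \<in> Y n \<Longrightarrow> tr (a * b) = tr (b * a)"
  using mt unfolding markov_trace_def by blast
lemma tr1: "tr 1 = 1"
  using mt unfolding markov_trace_def by blast
lemma tr_g: "1 \<le> n \<Longrightarrow> a \<in> Y n \<Longrightarrow> tr (a * g n) = z * tr a"
  using mt unfolding markov_trace_def by blast
lemma tr_t: "1 \<le> s \<Longrightarrow> s \<le> d - 1 \<Longrightarrow> a \<in> Y n \<Longrightarrow> tr (a * t (n+1) ^ s) = x s * tr a"
  using mt unfolding markov_trace_def by blast

lemma Y_one: "1 \<in> Y n" using Yalg.scal[of emb 1 g t n] emb1 by simp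
lemma Y_zero: "0 \<in> Y n" using Yalg.scal[of emb 0 g t n] emb0 by simp
lemma Y_pow: "a \<in> Y n \<Longrightarrow> a ^ k \<in> Y n"
  by (induction k) (auto intro: Y_one Yalg.mult)
lemma Y_mono: "a \<in> Y n \<Longrightarrow> n \<le> n' \<Longrightarrow> a \<in> Y n'"
  by (induction rule: Yalg.induct) (auto intro: Yalg.intros)
lemma Y_sum: "finite A \<Longrightarrow> (\<And>i. i \<in> A \<Longrightarrow> f i \<in> Y n) \<Longrightarrow> sum f A \<in> Y n"
  by (induction rule: finite_induct) (auto intro: Y_zero Yalg.add)
lemma tr0: "tr 0 = 0" using tr_scal[of 1 0 0] Y_one emb0 by simp
lemma tr_sum: "finite A \<Longrightarrow> (\<And>i. i \<in> A \<Longrightarrow> f i \<in> Y n) \<Longrightarrow> tr (sum f A) = (\<Sum>i\<in>A. tr (f i))"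
proof (induction rule: finite_induct)
  case (insert a F)
  have "tr (f a + sum f F) = tr (f a) + tr (sum f F)"
    by (rule tr_add) (use insert in \<open>auto intro!: Y_sum\<close>)
  then show ?case using insert by simp
qed (simp add: tr0)

lemmas Yint = Yalg.scal Yalg.gen_g Yalg.gen_t Yalg.add Yalg.mult Y_one Y_pow Y_sum

lemma pow_comm: "(a::'a) * y = y * b \<Longrightarrow> a ^ k * y = y * b ^ k"
proof (induction k)
  case (Suc k)
  assume ay: "a * y = y * b"
  have "a ^ Suc k * y = a * (a ^ k * y)" by (simp only: power_Suc mult.assoc)
  also have "\<dots> = a * (y * b ^ k)" using Suc ay by simp
  also have "\<dots> = (a * y) * b ^ k" by (simp add: mult.assoc)
  also have "\<dots> = y * b ^ Suc k" using ay by (simp only: power_Suc mult.assoc)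
  finally show ?case .
qed simp

lemma t_pow_mod: "1 \<le> i \<Longrightarrow> t i ^ k = t i ^ (k mod d)"
proof -
  assume "1 \<le> i"
  have "t i ^ k = t i ^ (d * (k div d) + k mod d)" by simp
  also have "\<dots> = (t i ^ d) ^ (k div d) * t i ^ (k mod d)" by (simp only: power_add power_mult)
  finally show ?thesis using t_pow_d[OF \<open>1 \<le> i\<close>] by simp
qed

lemma tr_tpow: "a \<in> Y n \<Longrightarrow> tr (a * t (n+1) ^ k) = xm d x k * tr a"
proof -
  assume a: "a \<in> Y n"
  have "t (n+1) ^ k = t (n+1) ^ (k mod d)" by (rule t_pow_mod) simp
  moreover have "k mod d < d" using d1 by simp
  ultimately show ?thesis
    using tr_t[OF _ _ a, of "k mod d"] x0 unfolding xm_def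
    by (cases "k mod d = 0") auto
qed



definition "t1 = t 1"
definition "t2 = t 2"
definition "t3 = t 3"
definition "g1 = g 1"
definition "g2 = g 2"

lemma Yt1: "1 \<le> n \<Longrightarrow> t1 ^ a \<in> Y n" unfolding t1_def by (intro Y_pow Yalg.gen_t) auto
lemma Yt2: "2 \<le> n \<Longrightarrow> t2 ^ a \<in> Y n" unfolding t2_def by (intro Y_pow Yalg.gen_t) auto
lemma Yt3: "3 \<le> n \<Longrightarrow> t3 ^ a \<in> Y n" unfolding t3_def by (intro Y_pow Yalg.gen_t) auto
lemma Yg1: "2 \<le> n \<Longrightarrow> g1 \<in> Y n" unfolding g1_def by (intro Yalg.gen_g) auto
lemma Yg2: "3 \<le> n \<Longrightarrow> g2 \<in> Y n" unfolding g2_def by (intro Yalg.gen_g) auto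
lemmas Ym = Yalg.mult Yt1 Yt2 Yt3 Yg1 Yg2

lemma tcomm: "t1 * t2 = t2 * t1" "t1 * t3 = t3 * t1" "t2 * t3 = t3 * t2"
  unfolding t1_def t2_def t3_def by (auto intro: t_comm)

lemma tc_gen: "(a::'a) * b = b * a \<Longrightarrow> a ^ i * b ^ j = b ^ j * a ^ i"
proof -
  assume ab: "a * b = b * a"
  have "a ^ i * b = b * a ^ i" by (rule pow_comm) (use ab in auto)
  then have "b ^ j * a ^ i = a ^ i * b ^ j" by (intro pow_comm) simp
  then show ?thesis by simp
qed

lemma tc12: "t1 ^ i * t2 ^ j = t2 ^ j * t1 ^ i" by (rule tc_gen) (rule tcomm)
lemma tc13: "t1 ^ i * t3 ^ j = t3 ^ j * t1 ^ i" by (rule tc_gen) (rule tcomm)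
lemma tc23: "t2 ^ i * t3 ^ j = t3 ^ j * t2 ^ i" by (rule tc_gen) (rule tcomm)

lemma c_t3g1: "t3 ^ k * g1 = g1 * t3 ^ k"
  by (rule pow_comm) (use g_t_far[of 1 3] in \<open>simp add: t3_def g1_def\<close>)
lemma c_t3g2: "t3 ^ k * g2 = g2 * t2 ^ k"
  by (rule pow_comm) (use g_t_same[of 2] in \<open>simp add: t3_def t2_def g2_def\<close>)
lemma c_t2g1: "t2 ^ k * g1 = g1 * t1 ^ k"
  by (rule pow_comm) (use g_t_same[of 1] in \<open>simp add: t1_def t2_def g1_def numeral_2_eq_2\<close>)
lemma c_t1g1: "t1 ^ k * g1 = g1 * t2 ^ k"
  by (rule pow_comm) (use g_t_next[of 1] in \<open>simp add: t1_def t2_def g1_def numeral_2_eq_2\<close>)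
lemma c_t1g2: "t1 ^ k * g2 = g2 * t1 ^ k"
  by (rule pow_comm) (use g_t_far[of 2 1] in \<open>simp add: t1_def g2_def\<close>)

lemma c_t3g1w: "t3 ^ k * (g1 * w) = g1 * (t3 ^ k * w)" by (simp only: mult.assoc[symmetric] c_t3g1)
lemma c_t3g2w: "t3 ^ k * (g2 * w) = g2 * (t2 ^ k * w)" by (simp only: mult.assoc[symmetric] c_t3g2)
lemma c_t2g1w: "t2 ^ k * (g1 * w) = g1 * (t1 ^ k * w)" by (simp only: mult.assoc[symmetric] c_t2g1)
lemmas cw = c_t3g1 c_t3g2 c_t2g1 c_t3g1w c_t3g2w c_t2g1w

lemma sw21: "t2 ^ c * (t1 ^ a * w) = t1 ^ a * (t2 ^ c * w)"
  by (metis mult.assoc tc12)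
lemma pp1: "t1 ^ a * (t1 ^ b * w) = t1 ^ (a + b) * w"
  by (simp add: power_add mult.assoc)
lemma pp2: "t2 ^ a * (t2 ^ b * w) = t2 ^ (a + b) * w"
  by (simp add: power_add mult.assoc)

lemma tr_t1p: "a \<in> Y 0 \<Longrightarrow> tr (a * t1 ^ k) = xm d x k * tr a"
  using tr_tpow[of a 0 k] by (simp add: t1_def)
lemma tr_t2p: "a \<in> Y 1 \<Longrightarrow> tr (a * t2 ^ k) = xm d x k * tr a"
  using tr_tpow[of a 1 k] by (simp add: t2_def numeral_2_eq_2)
lemma tr_t3p: "a \<in> Y 2 \<Longrightarrow> tr (a * t3 ^ k) = xm d x k * tr a"
  using tr_tpow[of a 2 k] by (simp add: t3_def numeral_2_eq_2 numeral_3_eq_3)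
lemma tr_g1: "a \<in> Y 1 \<Longrightarrow> tr (a * g1) = z * tr a"
  using tr_g[of 1 a] by (simp add: g1_def)
lemma tr_g2: "a \<in> Y 2 \<Longrightarrow> tr (a * g2) = z * tr a"
  using tr_g[of 2 a] by (simp add: g2_def numeral_2_eq_2)

lemma tr_T1: "tr (t1 ^ a) = xm d x a"
  using tr_t1p[of 1 a] Y_one tr1 by simp
lemma tr_T2: "tr (t1 ^ a * t2 ^ b) = xm d x a * xm d x b"
  using tr_t2p[of "t1 ^ a" b] Yt1[of 1 a] tr_T1 by simp
lemma tr_T: "tr (t1 ^ a * t2 ^ b * t3 ^ c) = xm d x a * xm d x b * xm d x c"
  using tr_t3p[of "t1 ^ a * t2 ^ b" c] tr_T2 by (simp add: Ym)

lemma trA: "tr (t1 ^ a * t2 ^ b * g1) = z * xm d x (a + b)"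
proof -
  have "tr (t1 ^ a * t2 ^ b * g1) = tr ((t1 ^ a * g1) * t1 ^ b)"
    by (simp add: mult.assoc c_t2g1)
  also have "\<dots> = tr (t1 ^ b * (t1 ^ a * g1))"
    by (rule tr_cyc[of _ 2]) (auto intro!: Ym)
  also have "\<dots> = tr (t1 ^ (b + a) * g1)" by (simp add: mult.assoc power_add)
  also have "\<dots> = z * tr (t1 ^ (b + a))" by (rule tr_g1) (simp add: Ym)
  finally show ?thesis by (simp add: tr_T1 add.commute)
qed

lemma trB: "tr (t1 ^ a * t2 ^ b * t3 ^ c * g1) = z * xm d x (a + b) * xm d x c"
proof -
  have "tr (t1 ^ a * t2 ^ b * t3 ^ c * g1) = tr ((t1 ^ a * t2 ^ b * g1) * t3 ^ c)"
    by (simp add: mult.assoc c_t3g1)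
  also have "\<dots> = xm d x c * tr (t1 ^ a * t2 ^ b * g1)" by (rule tr_t3p) (auto intro!: Ym)
  finally show ?thesis by (simp add: trA)
qed

lemma trC: "tr (t1 ^ a * t2 ^ b * t3 ^ c * g2) = z * xm d x a * xm d x (b + c)"
proof -
  have "tr (t1 ^ a * t2 ^ b * t3 ^ c * g2) = tr ((t1 ^ a * t2 ^ b * g2) * t2 ^ c)"
    by (simp add: mult.assoc c_t3g2)
  also have "\<dots> = tr (t2 ^ c * (t1 ^ a * t2 ^ b * g2))"
    by (rule tr_cyc[of _ 3]) (auto intro!: Ym)
  also have "t2 ^ c * (t1 ^ a * t2 ^ b * g2) = t1 ^ a * t2 ^ (b + c) * g2"
    by (simp add: mult.assoc sw21 pp2 add.commute)
  also have "tr (t1 ^ a * t2 ^ (b + c) * g2) = z * tr (t1 ^ a * t2 ^ (b + c))" by (rule tr_g2) (simp add: Ym)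
  finally show ?thesis by (simp add: tr_T2)
qed


lemma trD: "tr (t1 ^ a * t2 ^ b * t3 ^ c * (g1 * g2)) = z * z * xm d x (a + b + c)"
proof -
  have "tr (t1 ^ a * t2 ^ b * t3 ^ c * (g1 * g2)) = tr ((t1 ^ a * t2 ^ b * g1 * g2) * t2 ^ c)"
    by (simp add: mult.assoc cw)
  also have "\<dots> = tr (t2 ^ c * (t1 ^ a * t2 ^ b * g1 * g2))"
    by (rule tr_cyc[of _ 3]) (auto intro!: Ym)
  also have "t2 ^ c * (t1 ^ a * t2 ^ b * g1 * g2) = (t1 ^ a * t2 ^ (b + c) * g1) * g2"
    by (simp add: mult.assoc sw21 pp2 add.commute)
  also have "tr ((t1 ^ a * t2 ^ (b + c) * g1) * g2) = z * tr (t1 ^ a * t2 ^ (b + c) * g1)"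
    by (rule tr_g2) (auto intro!: Ym)
  finally show ?thesis by (simp add: trA add.assoc)
qed

lemma trE: "tr (t1 ^ a * t2 ^ b * t3 ^ c * (g2 * g1)) = z * z * xm d x (a + b + c)"
proof -
  have "tr (t1 ^ a * t2 ^ b * t3 ^ c * (g2 * g1)) = tr ((t1 ^ a * t2 ^ b * g2 * g1) * t1 ^ c)"
    by (simp add: mult.assoc cw)
  also have "\<dots> = tr (t1 ^ c * (t1 ^ a * t2 ^ b * g2 * g1))"
    by (rule tr_cyc[of _ 3]) (auto intro!: Ym)
  also have "t1 ^ c * (t1 ^ a * t2 ^ b * g2 * g1) = (t1 ^ (a + c) * t2 ^ b * g2) * g1"
    by (simp add: mult.assoc pp1 add.commute)
  also have "tr ((t1 ^ (a + c) * t2 ^ b * g2) * g1) = tr (g1 * (t1 ^ (a + c) * t2 ^ b * g2))"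
    by (rule tr_cyc[of _ 3]) (auto intro!: Ym)
  also have "g1 * (t1 ^ (a + c) * t2 ^ b * g2) = (g1 * (t1 ^ (a + c) * t2 ^ b)) * g2"
    by (simp add: mult.assoc)
  also have "tr \<dots> = z * tr (g1 * (t1 ^ (a + c) * t2 ^ b))"
    by (rule tr_g2) (auto intro!: Ym)
  also have "tr (g1 * (t1 ^ (a + c) * t2 ^ b)) = tr (t1 ^ (a + c) * t2 ^ b * g1)"
    by (rule tr_cyc[of _ 2]) (auto intro!: Ym)
  finally show ?thesis by (simp add: trA add.assoc add.commute add.left_commute)
qed

lemma trF: "tr (t1 ^ a * t2 ^ b * t3 ^ c * (g1 * g2 * g1)) = z * tr (t1 ^ (a + c) * t2 ^ b * (g1 * g1))"
proof -
  have "tr (t1 ^ a * t2 ^ b * t3 ^ c * (g1 * g2 * g1)) = tr ((t1 ^ a * t2 ^ b * g1 * g2 * g1) * t1 ^ c)"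
    by (simp add: mult.assoc cw)
  also have "\<dots> = tr (t1 ^ c * (t1 ^ a * t2 ^ b * g1 * g2 * g1))"
    by (rule tr_cyc[of _ 3]) (auto intro!: Ym)
  also have "t1 ^ c * (t1 ^ a * t2 ^ b * g1 * g2 * g1) = (t1 ^ (a + c) * t2 ^ b * g1 * g2) * g1"
    by (simp add: mult.assoc pp1 add.commute)
  also have "tr ((t1 ^ (a + c) * t2 ^ b * g1 * g2) * g1) = tr (g1 * (t1 ^ (a + c) * t2 ^ b * g1 * g2))"
    by (rule tr_cyc[of _ 3]) (auto intro!: Ym)
  also have "g1 * (t1 ^ (a + c) * t2 ^ b * g1 * g2) = (g1 * (t1 ^ (a + c) * t2 ^ b * g1)) * g2"
    by (simp add: mult.assoc)
  also have "tr \<dots> = z * tr (g1 * (t1 ^ (a + c) * t2 ^ b * g1))"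
    by (rule tr_g2) (auto intro!: Ym)
  also have "tr (g1 * (t1 ^ (a + c) * t2 ^ b * g1)) = tr (t1 ^ (a + c) * t2 ^ b * g1 * g1)"
    by (rule tr_cyc[of _ 2]) (auto intro!: Ym)
  finally show ?thesis by (simp add: mult.assoc)
qed


lemma emb_mul_left: "y * (emb c * w) = emb c * (y * w)"
  by (metis emb_comm mult.assoc)

lemma mono12: "t1 ^ p * t2 ^ q * (t1 ^ k * t2 ^ j) = t1 ^ (p + k) * t2 ^ (q + j)"
proof -
  have "t2 ^ q * (t1 ^ k * t2 ^ j) = t1 ^ k * (t2 ^ q * t2 ^ j)"
    by (metis mult.assoc tc12)
  then show ?thesis by (simp add: mult.assoc power_add)
qed

lemma e1_eq: "e0 d emb t 1 = emb (1 / of_nat d) * (\<Sum>k<d. t1 ^ k * t2 ^ (d - k))"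
  unfolding ee_def t1_def t2_def by (simp add: numeral_2_eq_2)

lemma g1sq: "g1 * g1 = 1 + emb (u - 1) * e0 d emb t 1 + emb (u - 1) * e0 d emb t 1 * g1"
  using quad[of 1] by (simp add: g1_def power2_eq_square)

lemma tr_sq: "tr (t1 ^ p * t2 ^ q * (g1 * g1)) = xm d x p * xm d x q
   + (u - 1) * ((1 / of_nat d) * (\<Sum>k<d. xm d x (p + k) * xm d x (q + (d - k))))
   + (u - 1) * z * xm d x (p + q)"
proof -
  define Yp where "Yp = t1 ^ p * t2 ^ q"
  define S1 where "S1 = (\<Sum>k<d. t1 ^ (p + k) * t2 ^ (q + (d - k)))"
  define S2 where "S2 = (\<Sum>k<d. t1 ^ (p + k) * t2 ^ (q + (d - k)) * g1)"
  define c where "c = (u - 1) * (1 / of_nat d)"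
  have YS: "Yp * (\<Sum>k<d. t1 ^ k * t2 ^ (d - k)) = S1"
    unfolding Yp_def S1_def by (simp add: sum_distrib_left mono12)
  have YS2: "Yp * ((\<Sum>k<d. t1 ^ k * t2 ^ (d - k)) * g1) = S2"
  proof -
    have "Yp * ((\<Sum>k<d. t1 ^ k * t2 ^ (d - k)) * g1) = (Yp * (\<Sum>k<d. t1 ^ k * t2 ^ (d - k))) * g1"
      by (simp only: mult.assoc)
    also have "\<dots> = S1 * g1" by (simp only: YS)
    also have "\<dots> = S2" unfolding S1_def S2_def by (simp add: sum_distrib_right)
    finally show ?thesis .
  qed
  define S where "S = (\<Sum>k<d. t1 ^ k * t2 ^ (d - k))"
  have gg: "g1 * g1 = 1 + emb c * S + emb c * (S * g1)"
    unfolding g1sq e1_eq c_def S_def emb_mult by (simp add: mult.assoc)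
  have eq: "Yp * (g1 * g1) = Yp + emb c * S1 + emb c * S2"
    unfolding gg distrib_left
    by (simp only: emb_mul_left YS[folded S_def] YS2[folded S_def] mult_1_right)
  have m1: "Yp \<in> Y 2" unfolding Yp_def by (auto intro!: Ym)
  have m2: "S1 \<in> Y 2" unfolding S1_def by (auto intro!: Ym Y_sum)
  have m3: "S2 \<in> Y 2" unfolding S2_def by (auto intro!: Ym Y_sum)
  have "tr (Yp * (g1 * g1)) = tr Yp + c * tr S1 + c * tr S2"
    unfolding eq
    using m1 m2 m3 by (simp add: tr_add[of _ 2] tr_scal[of _ 2] Yalg.add Yalg.mult Yalg.scal)
  moreover have "tr S1 = (\<Sum>k<d. xm d x (p + k) * xm d x (q + (d - k)))"
    unfolding S1_def by (subst tr_sum[of _ _ 2]) (auto intro!: Ym simp: tr_T2)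
  moreover have "tr S2 = (\<Sum>k<d. z * xm d x (p + q))"
  proof -
    have "tr S2 = (\<Sum>k<d. z * xm d x (p + k + (q + (d - k))))"
      unfolding S2_def by (subst tr_sum[of _ _ 2]) (auto intro!: Ym simp: trA)
    also have "\<dots> = (\<Sum>k<d. z * xm d x (p + q))"
    proof (rule sum.cong)
      fix k assume "k \<in> {..<d}"
      then have eq: "p + k + (q + (d - k)) = (p + q) + d" by auto
      show "z * xm d x (p + k + (q + (d - k))) = z * xm d x (p + q)"
        by (simp only: eq xm_def mod_add_self2)
    qed simp
    finally show ?thesis .
  qed
  moreover have "tr Yp = xm d x p * xm d x q" unfolding Yp_def by (rule tr_T2)
  moreover have "c * (\<Sum>k<d. z * xm d x (p + q)) = (u - 1) * z * xm d x (p + q)"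
    unfolding c_def using d1 by simp
  moreover have "c * (\<Sum>k<d. xm d x (p + k) * xm d x (q + (d - k)))
     = (u - 1) * ((1 / of_nat d) * (\<Sum>k<d. xm d x (p + k) * xm d x (q + (d - k))))"
    unfolding c_def by (simp only: mult.assoc)
  ultimately show ?thesis unfolding Yp_def by simp
qed


definition "Xi k = x (nat (k mod int d))"

lemma xm_Xi: "xm d x n = Xi (int n)"
  unfolding xm_def Xi_def by (simp flip: zmod_int)

lemma Xi_cong: "k mod int d = k' mod int d \<Longrightarrow> Xi k = Xi k'"
  unfolding Xi_def by simp

definition "F m j = Xi (int m + j) * Xi (- j)"

lemma F_mod: "F m (j mod int d) = F m j"
proof -
  have "Xi (int m + j mod int d) = Xi (int m + j)"
    by (rule Xi_cong) (simp add: mod_add_right_eq)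
  moreover have "Xi (- (j mod int d)) = Xi (- j)"
    by (rule Xi_cong) (simp add: mod_minus_eq)
  ultimately show ?thesis unfolding F_def by simp
qed

lemma reindex: "(\<Sum>k<d. F m (c + int k)) = (\<Sum>k<d. F m (int k))"
proof -
  define h where "h k = nat ((c + int k) mod int d)" for k
  have dpos: "int d > 0" using d1 by simp
  have hint: "int (h k) = (c + int k) mod int d" for k
    unfolding h_def using dpos by simp
  have inj: "inj_on h {..<d}"
  proof (rule inj_onI)
    fix k k' assume k: "k \<in> {..<d}" and k': "k' \<in> {..<d}" and e: "h k = h k'"
    have "(c + int k) mod int d = (c + int k') mod int d" using hint[of k] hint[of k'] e by simp
    then have "((c + int k) - c) mod int d = ((c + int k') - c) mod int d"
      by (rule mod_diff_cong) simp
    then have "int k mod int d = int k' mod int d" by simp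
    then show "k = k'" using k k' by simp
  qed
  have sub: "h ` {..<d} \<subseteq> {..<d}"
  proof
    fix y assume "y \<in> h ` {..<d}"
    then obtain k where "y = h k" by auto
    then have "int y = (c + int k) mod int d" using hint by simp
    then have "int y < int d" using dpos by simp
    then show "y \<in> {..<d}" by simp
  qed
  have img: "h ` {..<d} = {..<d}" by (rule endo_inj_surj[OF _ sub inj]) simp
  have bij: "bij_betw h {..<d} {..<d}" using inj img by (simp add: bij_betw_def)
  have "(\<Sum>k<d. F m (c + int k)) = (\<Sum>k<d. F m (int (h k)))"
    by (rule sum.cong) (simp_all add: hint F_mod)
  also have "\<dots> = (\<Sum>k<d. F m (int k))"
    by (rule sum.reindex_bij_betw[OF bij])
  finally show ?thesis .
qed

lemma EE_F: "EE d x m = (1 / of_nat d) * (\<Sum>k<d. F m (int k))"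
proof -
  have "(\<Sum>s<d. xm d x (m + s) * xm d x (d - s)) = (\<Sum>k<d. F m (int k))"
  proof (rule sum.cong)
    fix s assume "s \<in> {..<d}"
    then have sd: "s < d" by simp
    have "xm d x (d - s) = Xi (- int s)"
      unfolding xm_Xi
    proof (rule Xi_cong)
      have "int (d - s) = - int s + int d" using sd by simp
      then show "int (d - s) mod int d = - int s mod int d" by simp
    qed
    then show "xm d x (m + s) * xm d x (d - s) = F m (int s)"
      unfolding F_def by (simp add: xm_Xi)
  qed simp
  then show ?thesis unfolding EE_def by simp
qed

lemma sumF: "(\<Sum>k<d. F m (c + int k)) = of_nat d * EE d x m"
  using reindex[of m c] EE_F[of m] d1 by simp


lemma xm_add_d: "xm d x (n + d) = xm d x n" unfolding xm_def by simp

lemma per_sr: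
  assumes sd: "s < d" and rd: "r < d" and md: "m < d"
  shows "tr (t1 ^ (m + s) * t2 ^ (d - s + r) * t3 ^ (d - r) * (g1 + g2 + g1 * g2 + g2 * g1 + g1 * g2 * g1))
   = z * xm d x (m + r) * xm d x (d - r) + z * xm d x (m + s) * xm d x (d - s)
     + z * F m (int s - int r) + (2 * z * z * x m + z * (u - 1) * EE d x m + (u - 1) * z * z * x m)"
proof -
  define a where "a = m + s"
  define b where "b = d - s + r"
  define c where "c = d - r"
  define M where "M = t1 ^ a * t2 ^ b * t3 ^ c"
  have mM: "M \<in> Y 3" unfolding M_def by (auto intro!: Ym)
  have mg: "g1 \<in> Y 3" "g2 \<in> Y 3" by (auto intro!: Ym)
  have "M * (g1 + g2 + g1 * g2 + g2 * g1 + g1 * g2 * g1)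
     = M * g1 + M * g2 + M * (g1 * g2) + M * (g2 * g1) + M * (g1 * g2 * g1)"
    by (simp only: distrib_left)
  then have sum5: "tr (M * (g1 + g2 + g1 * g2 + g2 * g1 + g1 * g2 * g1))
     = tr (M * g1) + tr (M * g2) + tr (M * (g1 * g2)) + tr (M * (g2 * g1)) + tr (M * (g1 * g2 * g1))"
    using mM mg by (simp add: tr_add[of _ 3] Yalg.add Yalg.mult)
  have ab: "xm d x (a + b) = xm d x (m + r)"
  proof -
    have "a + b = (m + r) + d" unfolding a_def b_def using sd by simp
    then show ?thesis by (simp only: xm_add_d)
  qed
  have bc: "xm d x (b + c) = xm d x (d - s)"
  proof -
    have "b + c = (d - s) + d" unfolding b_def c_def using sd rd by simp
    then show ?thesis by (simp only: xm_add_d)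
  qed
  have abc: "xm d x (a + b + c) = x m"
  proof -
    have "a + b + c = m + d + d" unfolding a_def b_def c_def using sd rd by simp
    then show ?thesis unfolding xm_def using md by simp
  qed
  have acb: "xm d x (a + c + b) = x m" using abc by (simp add: ac_simps)
  have P1: "xm d x (a + c) * xm d x b = F m (int s - int r)"
  proof -
    have 1: "xm d x (a + c) = Xi (int m + (int s - int r))"
      unfolding xm_Xi
    proof (rule Xi_cong)
      have eq: "int (a + c) = (int m + (int s - int r)) + int d" unfolding a_def c_def using rd by simp
      show "int (a + c) mod int d = (int m + (int s - int r)) mod int d"
        unfolding eq mod_add_self2 by (rule refl)
    qed
    have 2: "xm d x b = Xi (- (int s - int r))"
      unfolding xm_Xi
    proof (rule Xi_cong)
      have eq: "int b = (- (int s - int r)) + int d" unfolding b_def using sd by simp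
      show "int b mod int d = (- (int s - int r)) mod int d"
        unfolding eq mod_add_self2 by (rule refl)
    qed
    show ?thesis unfolding F_def 1 2 ..
  qed
  have P2: "(\<Sum>k<d. xm d x (a + c + k) * xm d x (b + (d - k))) = of_nat d * EE d x m"
  proof -
    have "(\<Sum>k<d. xm d x (a + c + k) * xm d x (b + (d - k))) = (\<Sum>k<d. F m ((int s - int r) + int k))"
    proof (rule sum.cong)
      fix k assume "k \<in> {..<d}"
      then have kd: "k < d" by simp
      have 1: "xm d x (a + c + k) = Xi (int m + ((int s - int r) + int k))"
        unfolding xm_Xi
      proof (rule Xi_cong)
        have eq: "int (a + c + k) = (int m + ((int s - int r) + int k)) + int d" unfolding a_def c_def using rd by simp
        show "int (a + c + k) mod int d = (int m + ((int s - int r) + int k)) mod int d"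
          unfolding eq mod_add_self2 by (rule refl)
      qed
      have 2: "xm d x (b + (d - k)) = Xi (- ((int s - int r) + int k))"
        unfolding xm_Xi
      proof (rule Xi_cong)
        have eq: "int (b + (d - k)) = ((- ((int s - int r) + int k)) + int d) + int d" unfolding b_def using sd kd by simp
        show "int (b + (d - k)) mod int d = (- ((int s - int r) + int k)) mod int d"
          unfolding eq mod_add_self2 by (rule refl)
      qed
      show "xm d x (a + c + k) * xm d x (b + (d - k)) = F m ((int s - int r) + int k)"
        unfolding F_def 1 2 ..
    qed simp
    also have "\<dots> = of_nat d * EE d x m" by (rule sumF)
    finally show ?thesis .
  qed
  have h1: "tr (M * g1) = z * xm d x (m + r) * xm d x (d - r)"
    unfolding M_def trB ab c_def ..
  have h2: "tr (M * g2) = z * xm d x (m + s) * xm d x (d - s)"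
    unfolding M_def trC bc a_def ..
  have h3: "tr (M * (g1 * g2)) = z * z * x m"
    unfolding M_def trD abc ..
  have h4: "tr (M * (g2 * g1)) = z * z * x m"
    unfolding M_def trE abc ..
  have h5: "tr (M * (g1 * g2 * g1)) = z * (F m (int s - int r) + (u - 1) * ((1 / of_nat d) * (of_nat d * EE d x m)) + (u - 1) * z * x m)"
    unfolding M_def trF tr_sq P1 P2 acb ..
  have dd: "(1 / of_nat d) * (of_nat d * EE d x m) = EE d x m" using d1 by simp
  have Meq: "t1 ^ (m + s) * t2 ^ (d - s + r) * t3 ^ (d - r) = M" unfolding M_def a_def b_def c_def ..
  show ?thesis unfolding Meq sum5 h1 h2 h3 h4 h5 dd by (simp add: algebra_simps)
qed

lemma sumEE: "(\<Sum>r<d. xm d x (m + r) * xm d x (d - r)) = of_nat d * EE d x m"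
  unfolding EE_def using d1 by simp

lemma total:
  assumes md: "m < d"
  shows "(\<Sum>s<d. \<Sum>r<d. z * xm d x (m + r) * xm d x (d - r) + z * xm d x (m + s) * xm d x (d - s)
     + z * F m (int s - int r) + (2 * z * z * x m + z * (u - 1) * EE d x m + (u - 1) * z * z * x m))
   = of_nat d * of_nat d * ((u + 1) * z ^ 2 * x m + (u + 2) * z * EE d x m)"
proof -
  define K where "K = 2 * z * z * x m + z * (u - 1) * EE d x m + (u - 1) * z * z * x m"
  have A: "(\<Sum>s<d. \<Sum>r<d. z * xm d x (m + r) * xm d x (d - r)) = of_nat d * (z * (of_nat d * EE d x m))"
    using sumEE by (simp add: mult.assoc flip: sum_distrib_left)
  have B: "(\<Sum>s<d. \<Sum>r<d. z * xm d x (m + s) * xm d x (d - s)) = of_nat d * (z * (of_nat d * EE d x m))"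
    using sumEE by (simp add: mult.assoc flip: sum_distrib_left)
  have C: "(\<Sum>s<d. \<Sum>r<d. z * F m (int s - int r)) = of_nat d * (z * (of_nat d * EE d x m))"
  proof -
    have Fr: "(\<Sum>s<d. F m (int s - int r)) = of_nat d * EE d x m" for r
    proof -
      have "(\<Sum>s<d. F m (int s - int r)) = (\<Sum>s<d. F m (- int r + int s))"
        by (simp add: algebra_simps)
      also have "\<dots> = of_nat d * EE d x m" by (rule sumF)
      finally show ?thesis .
    qed
    have "(\<Sum>s<d. \<Sum>r<d. z * F m (int s - int r)) = (\<Sum>r<d. \<Sum>s<d. z * F m (int s - int r))"
      by (rule sum.swap)
    also have "\<dots> = (\<Sum>r<d. z * (of_nat d * EE d x m))"
      by (simp add: Fr flip: sum_distrib_left)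
    finally show ?thesis by simp
  qed
  have D: "(\<Sum>s<d. \<Sum>r<d. K) = of_nat d * (of_nat d * K)" by simp
  have "(\<Sum>s<d. \<Sum>r<d. z * xm d x (m + r) * xm d x (d - r) + z * xm d x (m + s) * xm d x (d - s)
     + z * F m (int s - int r) + K)
   = (\<Sum>s<d. \<Sum>r<d. z * xm d x (m + r) * xm d x (d - r)) + (\<Sum>s<d. \<Sum>r<d. z * xm d x (m + s) * xm d x (d - s))
     + (\<Sum>s<d. \<Sum>r<d. z * F m (int s - int r)) + (\<Sum>s<d. \<Sum>r<d. K)"
    by (simp only: sum.distrib)
  also have "\<dots> = of_nat d * of_nat d * ((u + 1) * z ^ 2 * x m + (u + 2) * z * EE d x m)"
    unfolding A B C D K_def by (simp add: algebra_simps power2_eq_square)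
  finally show ?thesis unfolding K_def .
qed

lemma mono123: "t1 ^ i * t2 ^ j * (t2 ^ k * t3 ^ l) = t1 ^ i * t2 ^ (j + k) * t3 ^ l"
  by (simp only: mult.assoc pp2)

lemma main:
  assumes md: "m < d"
  shows "tr (ee d emb t m 1 * e0 d emb t 2 * g12 g)
         = (u + 1) * z ^ 2 * x m + (u + 2) * z * EE d x m + tr (ee d emb t m 1 * e0 d emb t 2)"
proof -
  define M where "M s r = t1 ^ (m + s) * t2 ^ (d - s + r) * t3 ^ (d - r)" for s r
  define W where "W = g1 + g2 + g1 * g2 + g2 * g1 + g1 * g2 * g1"
  define X where "X = ee d emb t m 1 * e0 d emb t 2"
  define c where "c = (1 / of_nat d * (1 / of_nat d) :: complex)"
  have e1: "ee d emb t m 1 = emb (1 / of_nat d) * (\<Sum>s<d. t1 ^ (m + s) * t2 ^ (d - s))"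
    unfolding ee_def t1_def t2_def by (simp add: numeral_2_eq_2)
  have e2: "e0 d emb t 2 = emb (1 / of_nat d) * (\<Sum>r<d. t2 ^ r * t3 ^ (d - r))"
    unfolding ee_def t2_def t3_def by (simp add: numeral_3_eq_3)
  have X: "X = emb c * (\<Sum>s<d. \<Sum>r<d. M s r)"
  proof -
    have "X = emb (1 / of_nat d) * emb (1 / of_nat d) * ((\<Sum>s<d. t1 ^ (m + s) * t2 ^ (d - s)) * (\<Sum>r<d. t2 ^ r * t3 ^ (d - r)))"
    proof -
      have "ee d emb t m 1 * e0 d emb t 2 = emb (1 / of_nat d) * ((\<Sum>s<d. t1 ^ (m + s) * t2 ^ (d - s)) * (emb (1 / of_nat d) * (\<Sum>r<d. t2 ^ r * t3 ^ (d - r))))"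
        unfolding e1 e2 by (simp only: mult.assoc)
      also have "\<dots> = emb (1 / of_nat d) * (emb (1 / of_nat d) * ((\<Sum>s<d. t1 ^ (m + s) * t2 ^ (d - s)) * (\<Sum>r<d. t2 ^ r * t3 ^ (d - r))))"
        by (subst emb_mul_left) (rule refl)
      finally show ?thesis unfolding X_def by (simp only: mult.assoc)
    qed
    also have "(\<Sum>s<d. t1 ^ (m + s) * t2 ^ (d - s)) * (\<Sum>r<d. t2 ^ r * t3 ^ (d - r)) = (\<Sum>s<d. \<Sum>r<d. M s r)"
      unfolding sum_product M_def by (simp only: mono123)
    finally show ?thesis unfolding c_def emb_mult by (simp only: mult.assoc)
  qed
  have mM: "M s r \<in> Y 3" for s r unfolding M_def by (auto intro!: Ym)
  have mW: "W \<in> Y 3" unfolding W_def by (auto intro!: Ym Yalg.add)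
  have mX: "X \<in> Y 3" unfolding X by (auto intro!: Yalg.mult Yalg.scal Y_sum mM)
  have g12: "g12 g = 1 + W" unfolding g12_def W_def g1_def g2_def by (simp add: add.assoc)
  have "tr (X * g12 g) = tr X + tr (X * W)"
    unfolding g12 distrib_left using mX mW by (simp add: tr_add[of _ 3] Yalg.mult)
  moreover have "tr (X * W) = c * (\<Sum>s<d. \<Sum>r<d. tr (M s r * W))"
  proof -
    have "X * W = emb c * (\<Sum>s<d. \<Sum>r<d. M s r * W)"
      unfolding X by (simp add: mult.assoc sum_distrib_right)
    then have "tr (X * W) = c * tr (\<Sum>s<d. \<Sum>r<d. M s r * W)"
      by (simp add: tr_scal[of _ 3] Y_sum Yalg.mult mM mW)
    also have "tr (\<Sum>s<d. \<Sum>r<d. M s r * W) = (\<Sum>s<d. \<Sum>r<d. tr (M s r * W))"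
      by (simp add: tr_sum[of _ _ 3] Y_sum Yalg.mult mM mW)
    finally show ?thesis .
  qed
  moreover have "(\<Sum>s<d. \<Sum>r<d. tr (M s r * W)) = (\<Sum>s<d. \<Sum>r<d. z * xm d x (m + r) * xm d x (d - r) + z * xm d x (m + s) * xm d x (d - s)
     + z * F m (int s - int r) + (2 * z * z * x m + z * (u - 1) * EE d x m + (u - 1) * z * z * x m))"
    unfolding M_def W_def using md by (intro sum.cong refl) (rule per_sr; simp)
  ultimately have "tr (X * g12 g) = tr X + c * (of_nat d * of_nat d * ((u + 1) * z ^ 2 * x m + (u + 2) * z * EE d x m))"
    using total[OF md] by simp
  also have "c * (of_nat d * of_nat d * ((u + 1) * z ^ 2 * x m + (u + 2) * z * EE d x m)) = (u + 1) * z ^ 2 * x m + (u + 2) * z * EE d x m"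
    unfolding c_def using d1 by (simp add: field_simps)
  finally show ?thesis unfolding X_def by simp
qed


end

theorem lemma7:
  fixes d m :: nat and u z :: complex and x :: "nat \<Rightarrow> complex"
    and emb :: "complex \<Rightarrow> 'a::ring_1" and g t :: "nat \<Rightarrow> 'a" and tr :: "'a \<Rightarrow> complex"
  assumes "d \<ge> 1" and "u \<noteq> 0" and "x 0 = 1"
    and "YH_rels d u emb g t"
    and "markov_trace d emb g t z x tr"
    and "m \<le> d - 1"
  shows "tr (ee d emb t m 1 * e0 d emb t 2 * g12 g)
         = (u + 1) * z ^ 2 * x m + (u + 2) * z * EE d x m + tr (ee d emb t m 1 * e0 d emb t 2)"
proof -
  interpret YH d u z x emb g t tr
    using assms by (unfold_locales) auto
  show ?thesis by (rule main) (use assms in simp)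
qed

end
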